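(* Let $\beta>0$, $K\ge1$, users $\mathcal X=\{x_1,\dots,x_m\}\subset\mathbb R^d$ and $\sigma:\mathbb R^d\times\mathbb R^d\to[0,1]$ be fixed. Then the welfare $W$, viewed as a function of a finite multiset of strategies, is submodular: for every finite multiset $S$ of strategies with $|S|\ge K-1$ and any strategies $s_x,s_y\in\mathbb R^d$, $$W(S\cup\{s_x\})-W(S)\ge W(S\cup\{s_x,s_y\})-W(S\cup\{s_y\}).$$
   Context: For a finite multiset $S$ of strategies (points of $\mathbb R^d$) with $|S|\ge K$ and a user $x_j$, $\mathcal T_j(S;K)$ is a sub-multiset of $K$ elements of $S$ with the largest values of $\sigma(\cdot,x_j)$; if $|S|=K-1$, $\mathcal T_j(S;K)=S\cup\{\bar s\}$ where $\bar s$ is a default item with $\sigma(\bar s,x)=0$ for all $x$. With $\varepsilon_s$ ($s\in\mathcal T_j(S;K)$) i.i.d. Gumbel of location $-\beta\gamma$ and scale $\beta$ (CDF $t\mapsto\exp(-e^{-(t+\beta\gamma)/\beta})$, $\gamma$ the Euler–Mascheroni constant), the welfare is $W(S)=\sum_{j=1}^m\mathbb E\big[\max_{s\in\mathcal T_j(S;K)}\{\sigma(s,x_j)+\varepsilon_s\}\big]$, which equals $\beta\sum_{j=1}^m\log\sum_{s\in\mathcal T_j(S;K)}\exp(\sigma(s,x_j)/\beta)$. When $S=\{s_1,\dots,s_n\}$ comes from a joint strategy of a competing content creation game, this is the social welfare of that game under top-$K$ recommendation and the Gumbel random-utility choice model. *)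

theory Defs
  imports "HOL-Analysis.Analysis" "HOL-Library.Multiset"
begin

text \<open>Top-K sub-multiset for user x: a sub-multiset of K elements of S whose
  sigma-values are at least those of all remaining elements of S.
  (Chosen by Hilbert choice; the welfare does not depend on the choice.)\<close>
definition topK :: "('a \<Rightarrow> 'a \<Rightarrow> real) \<Rightarrow> nat \<Rightarrow> 'a multiset \<Rightarrow> 'a \<Rightarrow> 'a multiset" where
  "topK \<sigma> K S x = (SOME T. T \<subseteq># S \<and> size T = K \<and>
        (\<forall>a\<in>#T. \<forall>b\<in>#(S - T). \<sigma> b x \<le> \<sigma> a x))"

text \<open>Welfare of user x: beta * log sum exp over the recommended set. If |S| = K-1
  the recommended set is S plus a default item with sigma = 0.\<close>
definition user_welfare ::
  "('a \<Rightarrow> 'a \<Rightarrow> real) \<Rightarrow> real \<Rightarrow> nat \<Rightarrow> 'a multiset \<Rightarrow> 'a \<Rightarrow> real" where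
  "user_welfare \<sigma> \<beta> K S x =
     (if K \<le> size S then \<beta> * ln (\<Sum>s\<in>#topK \<sigma> K S x. exp (\<sigma> s x / \<beta>))
      else \<beta> * ln ((\<Sum>s\<in>#S. exp (\<sigma> s x / \<beta>)) + exp (0 / \<beta>)))"

definition welfare ::
  "('a \<Rightarrow> 'a \<Rightarrow> real) \<Rightarrow> real \<Rightarrow> nat \<Rightarrow> nat \<Rightarrow> (nat \<Rightarrow> 'a) \<Rightarrow> 'a multiset \<Rightarrow> real" where
  "welfare \<sigma> \<beta> K m x S = (\<Sum>j=1..m. user_welfare \<sigma> \<beta> K S (x j))"

end

theory Submission
  imports Defs
begin

definition validK :: "('a \<Rightarrow> real) \<Rightarrow> nat \<Rightarrow> 'a multiset \<Rightarrow> 'a multiset \<Rightarrow> bool" where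
  "validK r K T S \<longleftrightarrow> T \<subseteq># S \<and> size T = K \<and> (\<forall>a\<in>#T. \<forall>b\<in>#(S - T). r b \<le> r a)"

lemma sum_dom:
  fixes f :: "'a \<Rightarrow> real"
  assumes "size X = size Y" "\<forall>d\<in>#X. \<forall>e\<in>#Y. f d \<le> f e"
  shows "(\<Sum>s\<in>#X. f s) \<le> (\<Sum>s\<in>#Y. f s)"
  using assms
proof (induction X arbitrary: Y)
  case empty
  then show ?case by simp
next
  case (add d X)
  then have "Y \<noteq> {#}" by auto
  then obtain e Y' where Y: "Y = add_mset e Y'" by (metis multi_nonempty_split)
  have "(\<Sum>s\<in>#X. f s) \<le> (\<Sum>s\<in>#Y'. f s)"
    using add.IH[of Y'] add.prems Y by auto
  moreover have "f d \<le> f e" using add.prems Y by auto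
  ultimately show ?case using Y by simp
qed

lemma ex_min:
  fixes r :: "'a \<Rightarrow> real"
  assumes "T \<noteq> {#}"
  shows "\<exists>a\<in>#T. \<forall>c\<in>#T. r a \<le> r c"
proof -
  let ?M = "Min (r ` set_mset T)"
  have fin: "finite (r ` set_mset T)" by simp
  have ne: "r ` set_mset T \<noteq> {}" using assms by simp
  have "?M \<in> r ` set_mset T" using Min_in[OF fin ne] .
  then obtain a where a: "a \<in># T" "r a = ?M" by auto
  have "\<forall>c\<in>#T. r a \<le> r c" using a(2) fin by simp
  then show ?thesis using a(1) by blast
qed

lemma valid_opt:
  fixes r w :: "'a \<Rightarrow> real"
  assumes v: "validK r K T S" and U: "U \<subseteq># S" "size U = K"
    and mono: "\<And>a b. r b \<le> r a \<Longrightarrow> w b \<le> w a"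
  shows "(\<Sum>s\<in>#U. w s) \<le> (\<Sum>s\<in>#T. w s)"
proof -
  have T: "T \<subseteq># S" "size T = K" "\<forall>a\<in>#T. \<forall>b\<in>#(S - T). r b \<le> r a"
    using v unfolding validK_def by auto
  have eU: "U = (U \<inter># T) + (U - T)"
    by (simp add: multiset_eq_iff min_def)
  have eT: "T = (U \<inter># T) + (T - U)"
    by (simp add: multiset_eq_iff min_def)
  have "size U = size (U \<inter># T) + size (U - T)" using eU by (metis size_union)
  moreover have "size T = size (U \<inter># T) + size (T - U)" using eT by (metis size_union)
  ultimately have sz: "size (U - T) = size (T - U)" using U T by simp
  have sub: "U - T \<subseteq># S - T" using U(1)
    by (simp add: subseteq_mset_def) (meson diff_le_mono)
  have dom: "\<forall>d\<in>#U - T. \<forall>e\<in>#T - U. w d \<le> w e"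
  proof (intro ballI)
    fix d e assume d: "d \<in># U - T" and e: "e \<in># T - U"
    have "d \<in># S - T" using sub d by (meson mset_subset_eqD)
    moreover have "e \<in># T" using e by (meson in_diffD)
    ultimately show "w d \<le> w e" using T(3) mono by blast
  qed
  have "(\<Sum>s\<in>#U - T. w s) \<le> (\<Sum>s\<in>#T - U. w s)" using sum_dom[OF sz dom] .
  moreover have "(\<Sum>s\<in>#U. w s) = (\<Sum>s\<in>#U \<inter># T. w s) + (\<Sum>s\<in>#U - T. w s)"
    by (subst eU) simp
  moreover have "(\<Sum>s\<in>#T. w s) = (\<Sum>s\<in>#U \<inter># T. w s) + (\<Sum>s\<in>#T - U. w s)"
    by (subst eT) simp
  ultimately show ?thesis by linarith
qed

lemma valid_step:
  fixes r w :: "'a \<Rightarrow> real"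
  assumes v: "validK r K T S" and a: "a \<in># T" "\<forall>c\<in>#T. r a \<le> r c"
    and mono: "\<And>a b. r b \<le> r a \<Longrightarrow> w b \<le> w a"
  shows "\<exists>T'. validK r K T' (add_mset z S) \<and>
           (\<Sum>s\<in>#T'. w s) = (\<Sum>s\<in>#T. w s) + max 0 (w z - w a) \<and>
           (\<forall>c\<in>#T'. r a \<le> r c)"
proof -
  have T: "T \<subseteq># S" "size T = K" "\<forall>a\<in>#T. \<forall>b\<in>#(S - T). r b \<le> r a"
    using v unfolding validK_def by auto
  show ?thesis
  proof (cases "r z \<le> r a")
    case True
    have e: "add_mset z S - T = add_mset z (S - T)"
      using T(1) by (simp add: multiset_eq_iff subseteq_mset_def)
         (metis Suc_diff_le)
    have "validK r K T (add_mset z S)"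
      unfolding validK_def
    proof (intro conjI)
      show "T \<subseteq># add_mset z S" using T(1) by (simp add: subseteq_mset_def le_SucI)
      show "size T = K" by (rule T(2))
      show "\<forall>a\<in>#T. \<forall>b\<in>#add_mset z S - T. r b \<le> r a"
        unfolding e using T(3) True a(2) by force
    qed
    moreover have "w z \<le> w a" using mono True by blast
    ultimately show ?thesis using a(2) by (intro exI[of _ T]) auto
  next
    case False
    define T' where "T' = add_mset z (T - {#a#})"
    have Ta: "T = add_mset a (T - {#a#})" using a(1) by simp
    have sizeT: "size T = Suc (size (T - {#a#}))"
      using arg_cong[OF Ta, of size] by simp
    have mem: "b \<in># S - T" if b1: "b \<in># add_mset z S - T'" and b2: "b \<noteq> a" for b
    proof -
      have "count (add_mset z S - T') b = count (S - T) b"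
        using b2 unfolding T'_def by simp
      then show ?thesis using b1 by (metis count_greater_zero_iff)
    qed
    have TaS: "T - {#a#} \<subseteq># S"
      using subset_mset.order_trans[OF diff_subset_eq_self T(1)] .
    have "validK r K T' (add_mset z S)"
      unfolding validK_def
    proof (intro conjI)
      show "T' \<subseteq># add_mset z S" unfolding T'_def using TaS by simp
      show "size T' = K" unfolding T'_def using T(2) sizeT by simp
      show "\<forall>c\<in>#T'. \<forall>b\<in>#add_mset z S - T'. r b \<le> r c"
      proof (intro ballI)
        fix c b assume c: "c \<in># T'" and b: "b \<in># add_mset z S - T'"
        have rb: "r b \<le> r a"
        proof (cases "b = a")
          case True then show ?thesis by simp
        next
          case ba: False then show ?thesis using mem[OF b ba] T(3) a(1) by blast
        qed
        show "r b \<le> r c"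
        proof (cases "c = z")
          case True
          then have "r c = r z" by simp
          then show ?thesis using rb False by linarith
        next
          case cz: False
          have "c \<in># T - {#a#}" using c cz unfolding T'_def by simp
          then have cT: "c \<in># T" by (rule in_diffD)
          show ?thesis
          proof (cases "b = a")
            case True then show ?thesis using a(2) cT by simp
          next
            case ba: False then show ?thesis using mem[OF b ba] T(3) cT by blast
          qed
        qed
      qed
    qed
    moreover have "(\<Sum>s\<in>#T'. w s) = (\<Sum>s\<in>#T. w s) + max 0 (w z - w a)"
    proof -
      have wa: "w a \<le> w z" using mono False by simp
      have "(\<Sum>s\<in>#add_mset a (T - {#a#}). w s) = w a + (\<Sum>s\<in>#T - {#a#}. w s)"
        by simp
      then have e1: "(\<Sum>s\<in>#T. w s) = w a + (\<Sum>s\<in>#T - {#a#}. w s)"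
        unfolding Ta[symmetric] .
      have e2: "(\<Sum>s\<in>#T'. w s) = w z + (\<Sum>s\<in>#T - {#a#}. w s)"
        unfolding T'_def by simp
      have "max 0 (w z - w a) = w z - w a" using wa by simp
      then show ?thesis using e1 e2 by linarith
    qed
    moreover have "\<forall>c\<in>#T'. r a \<le> r c"
    proof
      fix c assume c: "c \<in># T'"
      show "r a \<le> r c"
      proof (cases "c = z")
        case True then show ?thesis using False by simp
      next
        case cz: False
        have "c \<in># T - {#a#}" using c cz unfolding T'_def by simp
        then have "c \<in># T" by (rule in_diffD)
        then show ?thesis using a(2) by blast
      qed
    qed
    ultimately show ?thesis by blast
  qed
qed

lemma valid_self: "size M = K \<Longrightarrow> validK r K M M"
  unfolding validK_def by simp

lemma valid_ex:
  fixes r :: "'a \<Rightarrow> real"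
  assumes "K \<ge> 1" "size S \<ge> K"
  shows "\<exists>T. validK r K T S"
  using assms(2)
proof (induction S)
  case empty
  then show ?case using assms(1) by simp
next
  case (add x S)
  show ?case
  proof (cases "size S \<ge> K")
    case True
    then obtain T where T: "validK r K T S" using add.IH by blast
    then have "size T = K" unfolding validK_def by simp
    then have "T \<noteq> {#}" using assms(1) by auto
    then obtain a where a: "a \<in># T" "\<forall>c\<in>#T. r a \<le> r c" using ex_min by blast
    from valid_step[OF T a, of r x] show ?thesis by blast
  next
    case False
    then have "size (add_mset x S) = K" using add.prems by simp
    then show ?thesis using valid_self by blast
  qed
qed

lemma valid_uniq:
  fixes r w :: "'a \<Rightarrow> real"
  assumes "validK r K T1 S" "validK r K T2 S"
    and mono: "\<And>a b. r b \<le> r a \<Longrightarrow> w b \<le> w a"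
  shows "(\<Sum>s\<in>#T1. w s) = (\<Sum>s\<in>#T2. w s)"
proof -
  have "(\<Sum>s\<in>#T1. w s) \<le> (\<Sum>s\<in>#T2. w s)"
    using valid_opt[OF assms(2), of T1 w] assms(1) mono unfolding validK_def by blast
  moreover have "(\<Sum>s\<in>#T2. w s) \<le> (\<Sum>s\<in>#T1. w s)"
    using valid_opt[OF assms(1), of T2 w] assms(2) mono unfolding validK_def by blast
  ultimately show ?thesis by linarith
qed

lemma topK_valid:
  assumes "K \<ge> 1" "size S \<ge> K"
  shows "validK (\<lambda>s. \<sigma> s u) K (topK \<sigma> K S u) S"
proof -
  obtain T where "validK (\<lambda>s. \<sigma> s u) K T S" using valid_ex[OF assms] by blast
  then have "\<exists>T. T \<subseteq># S \<and> size T = K \<and> (\<forall>a\<in>#T. \<forall>b\<in>#(S - T). \<sigma> b u \<le> \<sigma> a u)"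
    unfolding validK_def by blast
  from someI_ex[OF this] show ?thesis unfolding validK_def topK_def .
qed

lemma sum_pos:
  fixes f :: "'a \<Rightarrow> real"
  assumes "\<forall>s\<in>#M. 0 < f s"
  shows "0 \<le> (\<Sum>s\<in>#M. f s) \<and> (M \<noteq> {#} \<longrightarrow> 0 < (\<Sum>s\<in>#M. f s))"
  using assms
proof (induction M)
  case empty then show ?case by simp
next
  case (add x M)
  then have "0 < f x" "0 \<le> (\<Sum>s\<in>#M. f s)" by auto
  then show ?case by simp
qed

lemma num_ineq:
  fixes A B p q \<beta> :: real
  assumes "0 < A" "A \<le> B" "0 \<le> q" "q \<le> p" "0 < \<beta>"
  shows "\<beta> * ln (B + q) - \<beta> * ln B \<le> \<beta> * ln (A + p) - \<beta> * ln A"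
proof -
  have B: "0 < B" using assms by linarith
  have "q / B \<le> p / A"
  proof -
    have "q / B \<le> q / A" using assms by (simp add: divide_left_mono)
    also have "\<dots> \<le> p / A" using assms by (simp add: divide_right_mono)
    finally show ?thesis .
  qed
  moreover have "0 \<le> q / B" using assms B by simp
  moreover have "0 \<le> p / A" using assms by simp
  ultimately have "ln (1 + q / B) \<le> ln (1 + p / A)"
    by (subst ln_le_cancel_iff) auto
  moreover have "ln (1 + q / B) = ln (B + q) - ln B"
  proof -
    have "1 + q / B = (B + q) / B" using B by (simp add: field_simps)
    then show ?thesis using B assms by (simp add: ln_div)
  qed
  moreover have "ln (1 + p / A) = ln (A + p) - ln A"
  proof -
    have "1 + p / A = (A + p) / A" using assms by (simp add: field_simps)
    then show ?thesis using assms by (simp add: ln_div)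
  qed
  ultimately have "ln (B + q) - ln B \<le> ln (A + p) - ln A" by linarith
  then have "\<beta> * (ln (B + q) - ln B) \<le> \<beta> * (ln (A + p) - ln A)"
    using assms(5) by (simp add: mult_left_mono)
  then show ?thesis by (simp add: algebra_simps)
qed

lemma per_user:
  fixes \<sigma> :: "'a \<Rightarrow> 'a \<Rightarrow> real" and \<beta> :: real and K :: nat
  assumes bp: "\<beta> > 0" and K1: "K \<ge> 1"
    and sg: "\<And>s y. 0 \<le> \<sigma> s y \<and> \<sigma> s y \<le> 1"
    and sz: "size S \<ge> K - 1"
  shows "user_welfare \<sigma> \<beta> K (add_mset sx (add_mset sy S)) u - user_welfare \<sigma> \<beta> K (add_mset sy S) u
         \<le> user_welfare \<sigma> \<beta> K (add_mset sx S) u - user_welfare \<sigma> \<beta> K S u"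
proof -
  define r where "r = (\<lambda>s. \<sigma> s u)"
  define w where "w = (\<lambda>s. exp (\<sigma> s u / \<beta>))"
  have mono: "\<And>a b. r b \<le> r a \<Longrightarrow> w b \<le> w a"
    unfolding r_def w_def using bp by (simp add: divide_right_mono)
  have w1: "\<And>s. 1 \<le> w s" unfolding w_def using sg bp by simp
  have wpos: "\<forall>s\<in>#M. 0 < w s" for M using w1 by (meson less_le_trans zero_less_one)
  have UW: "user_welfare \<sigma> \<beta> K M u = \<beta> * ln (\<Sum>s\<in>#T. w s)"
    if "validK r K T M" "size M \<ge> K" for M T
  proof -
    have "validK r K (topK \<sigma> K M u) M" unfolding r_def using topK_valid[OF K1 that(2)] .
    from valid_uniq[OF this that(1) mono] show ?thesis
      unfolding user_welfare_def w_def using that(2) by simp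
  qed
  have Tne: "T \<noteq> {#}" if "validK r K T M" for T M
    using that K1 unfolding validK_def by auto
  show ?thesis
  proof (cases "size S \<ge> K")
    case True
    obtain T where T: "validK r K T S" using valid_ex[OF K1 True] by blast
    obtain a where a: "a \<in># T" "\<forall>c\<in>#T. r a \<le> r c" using ex_min[OF Tne[OF T]] by blast
    obtain T1 where T1: "validK r K T1 (add_mset sx S)"
      "(\<Sum>s\<in>#T1. w s) = (\<Sum>s\<in>#T. w s) + max 0 (w sx - w a)"
      using valid_step[where w=w and z=sx, OF T a mono] by blast
    obtain T2 where T2: "validK r K T2 (add_mset sy S)"
      "(\<Sum>s\<in>#T2. w s) = (\<Sum>s\<in>#T. w s) + max 0 (w sy - w a)"
      "\<forall>c\<in>#T2. r a \<le> r c"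
      using valid_step[where w=w and z=sy, OF T a mono] by blast
    obtain a2 where a2: "a2 \<in># T2" "\<forall>c\<in>#T2. r a2 \<le> r c" using ex_min[OF Tne[OF T2(1)]] by blast
    obtain T3 where T3: "validK r K T3 (add_mset sx (add_mset sy S))"
      "(\<Sum>s\<in>#T3. w s) = (\<Sum>s\<in>#T2. w s) + max 0 (w sx - w a2)"
      using valid_step[where w=w and z=sx, OF T2(1) a2 mono] by blast
    have "w a \<le> w a2" using mono T2(3) a2(1) by blast
    then have q: "max 0 (w sx - w a2) \<le> max 0 (w sx - w a)" by simp
    have A: "0 < (\<Sum>s\<in>#T. w s)" using sum_pos[OF wpos[of T]] Tne[OF T] by blast
    have AB: "(\<Sum>s\<in>#T. w s) \<le> (\<Sum>s\<in>#T2. w s)" using T2(2) by simp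
    have "\<beta> * ln ((\<Sum>s\<in>#T2. w s) + max 0 (w sx - w a2)) - \<beta> * ln (\<Sum>s\<in>#T2. w s)
       \<le> \<beta> * ln ((\<Sum>s\<in>#T. w s) + max 0 (w sx - w a)) - \<beta> * ln (\<Sum>s\<in>#T. w s)"
      by (rule num_ineq[OF A AB _ q bp]) simp
    moreover have "user_welfare \<sigma> \<beta> K S u = \<beta> * ln (\<Sum>s\<in>#T. w s)" using UW[OF T True] .
    moreover have "user_welfare \<sigma> \<beta> K (add_mset sx S) u = \<beta> * ln (\<Sum>s\<in>#T1. w s)"
      using UW[OF T1(1)] True by simp
    moreover have "user_welfare \<sigma> \<beta> K (add_mset sy S) u = \<beta> * ln (\<Sum>s\<in>#T2. w s)"
      using UW[OF T2(1)] True by simp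
    moreover have "user_welfare \<sigma> \<beta> K (add_mset sx (add_mset sy S)) u = \<beta> * ln (\<Sum>s\<in>#T3. w s)"
      using UW[OF T3(1)] True by simp
    ultimately show ?thesis using T1(2) T3(2) by simp
  next
    case False
    then have szK: "size S = K - 1" using sz by simp
    define A where "A = (\<Sum>s\<in>#S. w s)"
    have A0: "0 \<le> A" unfolding A_def using sum_pos[OF wpos[of S]] by blast
    have US: "user_welfare \<sigma> \<beta> K S u = \<beta> * ln (A + 1)"
      unfolding user_welfare_def A_def w_def using False by simp
    have sx1: "size (add_mset sx S) = K" using szK K1 by simp
    have sy1: "size (add_mset sy S) = K" using szK K1 by simp
    have Ux: "user_welfare \<sigma> \<beta> K (add_mset sx S) u = \<beta> * ln (A + w sx)"
      using UW[OF valid_self[OF sx1]] sx1 unfolding A_def by (simp add: add.commute)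
    have T2: "validK r K (add_mset sy S) (add_mset sy S)" using valid_self[OF sy1] .
    have Uy: "user_welfare \<sigma> \<beta> K (add_mset sy S) u = \<beta> * ln (A + w sy)"
      using UW[OF T2] sy1 unfolding A_def by (simp add: add.commute)
    obtain a2 where a2: "a2 \<in># add_mset sy S" "\<forall>c\<in>#add_mset sy S. r a2 \<le> r c"
      using ex_min[OF Tne[OF T2]] by blast
    obtain T3 where T3: "validK r K T3 (add_mset sx (add_mset sy S))"
      "(\<Sum>s\<in>#T3. w s) = (\<Sum>s\<in>#add_mset sy S. w s) + max 0 (w sx - w a2)"
      using valid_step[where w=w and z=sx, OF T2 a2 mono] by blast
    have Uxy: "user_welfare \<sigma> \<beta> K (add_mset sx (add_mset sy S)) u
        = \<beta> * ln ((A + w sy) + max 0 (w sx - w a2))"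
      using UW[OF T3(1)] sy1 T3(2) unfolding A_def by (simp add: add.commute)
    have q: "max 0 (w sx - w a2) \<le> w sx - 1" using w1[of a2] w1[of sx] by simp
    have "\<beta> * ln ((A + w sy) + max 0 (w sx - w a2)) - \<beta> * ln (A + w sy)
       \<le> \<beta> * ln ((A + 1) + (w sx - 1)) - \<beta> * ln (A + 1)"
      by (rule num_ineq[OF _ _ _ q bp]) (use A0 w1[of sy] in simp_all)
    then show ?thesis using US Ux Uy Uxy by simp
  qed
qed

theorem lemma2:
  fixes \<sigma> :: "real^'d \<Rightarrow> real^'d \<Rightarrow> real"
    and \<beta> :: real and K m :: nat and x :: "nat \<Rightarrow> real^'d"
    and S :: "(real^'d) multiset" and sx sy :: "real^'d"
  assumes "\<beta> > 0" and "K \<ge> 1"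
    and "\<And>s y. 0 \<le> \<sigma> s y \<and> \<sigma> s y \<le> 1"
    and "size S \<ge> K - 1"
  shows "welfare \<sigma> \<beta> K m x (add_mset sx S) - welfare \<sigma> \<beta> K m x S
         \<ge> welfare \<sigma> \<beta> K m x (add_mset sx (add_mset sy S)) - welfare \<sigma> \<beta> K m x (add_mset sy S)"
proof -
  have "(\<Sum>j=1..m. user_welfare \<sigma> \<beta> K (add_mset sx (add_mset sy S)) (x j) - user_welfare \<sigma> \<beta> K (add_mset sy S) (x j))
      \<le> (\<Sum>j=1..m. user_welfare \<sigma> \<beta> K (add_mset sx S) (x j) - user_welfare \<sigma> \<beta> K S (x j))"
    by (rule sum_mono) (rule per_user[OF assms])
  then show ?thesis by (simp add: welfare_def sum_subtractf)
qed

end
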